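(* Let $4\le k\le\infty$ and let $\Gamma$ be a graph whose maximal cliques (with respect to inclusion) pairwise intersect in at most a vertex. Let $V$ and $M$ be the sets of vertices and of maximal cliques of $\Gamma$, and let $\Gamma^*$ be the graph with vertex set $V\cup M$ in which: $v,v'\in V$ are adjacent iff they are adjacent in $\Gamma$; $m,m'\in M$ are adjacent iff $m\cap m'\neq\emptyset$; and $v\in V$, $m\in M$ are adjacent iff $v\in m$. Then the flag complex spanned on $\Gamma^*$ is $k$-large if and only if the flag complex spanned on $\Gamma$ is $k$-large.
   Context: The flag complex spanned on a graph has a simplex for each finite clique. A cycle is a subcomplex that is a subdivision of the circle; it is full if every simplex spanned by its vertices lies in it. A flag complex is $k$-large if it has no full cycle of length $<k$. *)

theory Defs
  imports Main "HOL-Library.Extended_Nat"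
begin

definition graph :: "'a set \<Rightarrow> ('a \<Rightarrow> 'a \<Rightarrow> bool) \<Rightarrow> bool" where
  "graph V E \<longleftrightarrow> (\<forall>x y. E x y \<longrightarrow> x \<in> V \<and> y \<in> V \<and> E y x \<and> x \<noteq> y)"

definition clique :: "'a set \<Rightarrow> ('a \<Rightarrow> 'a \<Rightarrow> bool) \<Rightarrow> 'a set \<Rightarrow> bool" where
  "clique V E C \<longleftrightarrow> C \<subseteq> V \<and> (\<forall>x\<in>C. \<forall>y\<in>C. x \<noteq> y \<longrightarrow> E x y)"

definition maximal_clique :: "'a set \<Rightarrow> ('a \<Rightarrow> 'a \<Rightarrow> bool) \<Rightarrow> 'a set \<Rightarrow> bool" where
  "maximal_clique V E C \<longleftrightarrow> clique V E C \<and> (\<forall>D. clique V E D \<and> C \<subseteq> D \<longrightarrow> D = C)"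

definition flag_complex :: "'a set \<Rightarrow> ('a \<Rightarrow> 'a \<Rightarrow> bool) \<Rightarrow> 'a set set" where
  "flag_complex V E = {\<sigma>. \<sigma> \<noteq> {} \<and> finite \<sigma> \<and> clique V E \<sigma>}"

definition is_cycle :: "'a set \<Rightarrow> ('a \<Rightarrow> 'a \<Rightarrow> bool) \<Rightarrow> 'a list \<Rightarrow> bool" where
  "is_cycle V E vs \<longleftrightarrow> length vs \<ge> 3 \<and> distinct vs \<and> set vs \<subseteq> V \<and>
     (\<forall>i < length vs. E (vs ! i) (vs ! ((i + 1) mod length vs)))"

definition cycle_subcomplex :: "'a list \<Rightarrow> 'a set set" where
  "cycle_subcomplex vs =
     {{vs ! i} | i. i < length vs} \<union> {{vs ! i, vs ! ((i + 1) mod length vs)} | i. i < length vs}"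

definition full_cycle :: "'a set \<Rightarrow> ('a \<Rightarrow> 'a \<Rightarrow> bool) \<Rightarrow> 'a list \<Rightarrow> bool" where
  "full_cycle V E vs \<longleftrightarrow> is_cycle V E vs \<and>
     (\<forall>\<sigma> \<in> flag_complex V E. \<sigma> \<subseteq> set vs \<longrightarrow> \<sigma> \<in> cycle_subcomplex vs)"

definition k_large :: "enat \<Rightarrow> 'a set \<Rightarrow> ('a \<Rightarrow> 'a \<Rightarrow> bool) \<Rightarrow> bool" where
  "k_large k V E \<longleftrightarrow> \<not> (\<exists>vs. full_cycle V E vs \<and> enat (length vs) < k)"

definition star_vertices :: "'a set \<Rightarrow> ('a \<Rightarrow> 'a \<Rightarrow> bool) \<Rightarrow> ('a + 'a set) set" where
  "star_vertices V E = Inl ` V \<union> Inr ` {m. maximal_clique V E m}"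

fun star_adj :: "'a set \<Rightarrow> ('a \<Rightarrow> 'a \<Rightarrow> bool) \<Rightarrow> ('a + 'a set) \<Rightarrow> ('a + 'a set) \<Rightarrow> bool" where
  "star_adj V E (Inl v) (Inl v') = E v v'"
| "star_adj V E (Inr m) (Inr m') =
     (maximal_clique V E m \<and> maximal_clique V E m' \<and> m \<noteq> m' \<and> m \<inter> m' \<noteq> {})"
| "star_adj V E (Inl v) (Inr m) = (v \<in> V \<and> maximal_clique V E m \<and> v \<in> m)"
| "star_adj V E (Inr m) (Inl v) = (v \<in> V \<and> maximal_clique V E m \<and> v \<in> m)"

end

theory Submission imports Defs begin

definition cyc :: "'v set \<Rightarrow> ('v \<Rightarrow> 'v \<Rightarrow> bool) \<Rightarrow> (nat \<Rightarrow> 'v) \<Rightarrow> nat \<Rightarrow> bool" where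
 "cyc V E f l \<longleftrightarrow> 3 \<le> l \<and> (\<forall>i. f (i + l) = f i) \<and> (\<forall>i d. 0 < d \<longrightarrow> d < l \<longrightarrow> f (i + d) \<noteq> f i)
    \<and> (\<forall>i. f i \<in> V) \<and> (\<forall>i. E (f i) (f (Suc i)))"

definition indc :: "'v set \<Rightarrow> ('v \<Rightarrow> 'v \<Rightarrow> bool) \<Rightarrow> (nat \<Rightarrow> 'v) \<Rightarrow> nat \<Rightarrow> bool" where
 "indc V E f l \<longleftrightarrow> cyc V E f l \<and> 4 \<le> l \<and> (\<forall>i j. E (f i) (f j) \<longrightarrow> f j = f (Suc i) \<or> f i = f (Suc j))"

definition lic :: "'v set \<Rightarrow> ('v \<Rightarrow> 'v \<Rightarrow> bool) \<Rightarrow> (nat \<Rightarrow> 'v) \<Rightarrow> nat \<Rightarrow> bool" where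
 "lic V E f l \<longleftrightarrow> cyc V E f l \<and> (\<forall>i. \<not> E (f i) (f (Suc (Suc i))))"

lemma indc_cyc: "indc V E f l \<Longrightarrow> cyc V E f l" by (simp add: indc_def)
lemma indc_4: "indc V E f l \<Longrightarrow> 4 \<le> l" by (simp add: indc_def)
lemma indc_ch: "indc V E f l \<Longrightarrow> E (f i) (f j) \<Longrightarrow> f j = f (Suc i) \<or> f i = f (Suc j)"
  unfolding indc_def by blast
lemma lic_cyc: "lic V E f l \<Longrightarrow> cyc V E f l" by (simp add: lic_def)
lemma lic_2: "lic V E f l \<Longrightarrow> \<not> E (f i) (f (Suc (Suc i)))" by (simp add: lic_def)
lemma cyc_per: "cyc V E f l \<Longrightarrow> f (i + l) = f i" by (simp add: cyc_def)
lemma cyc_dist: "cyc V E f l \<Longrightarrow> 0 < d \<Longrightarrow> d < l \<Longrightarrow> f (i + d) \<noteq> f i" by (simp add: cyc_def)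
lemma cyc_V: "cyc V E f l \<Longrightarrow> f i \<in> V" by (simp add: cyc_def)
lemma cyc_E: "cyc V E f l \<Longrightarrow> E (f i) (f (Suc i))" by (simp add: cyc_def)

lemma graph_irr: "graph V E \<Longrightarrow> \<not> E x x"
  unfolding graph_def by blast
lemma graph_sym: "graph V E \<Longrightarrow> E x y \<Longrightarrow> E y x"
  unfolding graph_def by blast
lemma graph_V: "graph V E \<Longrightarrow> E x y \<Longrightarrow> x \<in> V \<and> y \<in> V"
  unfolding graph_def by blast

lemma cyc_mult: "cyc V E f l \<Longrightarrow> f (j + k*l) = f j"
proof (induction k)
  case 0 then show ?case by simp
next
  case (Suc k)
  have "f (j + Suc k * l) = f ((j + k*l) + l)" by (simp add: algebra_simps)
  also have "\<dots> = f (j + k*l)" using Suc.prems unfolding cyc_def by blast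
  finally show ?case using Suc by simp
qed

lemma cyc_mod: "cyc V E f l \<Longrightarrow> f (i mod l) = f i"
  using cyc_mult[of V E f l "i mod l" "i div l"] by (simp add: mod_div_mult_eq)

lemma cyc_ne: "cyc V E f l \<Longrightarrow> p < l \<Longrightarrow> q < l \<Longrightarrow> p \<noteq> q \<Longrightarrow> f p \<noteq> f q"
proof -
  assume c: "cyc V E f l" and pq: "p < l" "q < l" "p \<noteq> q"
  have d: "\<And>i d. 0 < d \<Longrightarrow> d < l \<Longrightarrow> f (i + d) \<noteq> f i" using c unfolding cyc_def by blast
  show ?thesis
  proof (cases "p < q")
    case True
    have "f (p + (q - p)) \<noteq> f p" using d[of "q - p" p] pq True by auto
    then show ?thesis using True by simp
  next
    case False
    have "f (q + (p - q)) \<noteq> f q" using d[of "p - q" q] pq False by auto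
    then show ?thesis using False by simp
  qed
qed

lemma cyc_l: "cyc V E f l \<Longrightarrow> 3 \<le> l" unfolding cyc_def by blast

lemma cyc_SH: "cyc V E f l \<Longrightarrow> f x = f y \<Longrightarrow> f (x + d) = f (y + d)"
proof -
  assume c: "cyc V E f l" and e: "f x = f y"
  have l: "0 < l" using cyc_l[OF c] by simp
  have "f (x mod l) = f (y mod l)" using e cyc_mod[OF c] by simp
  hence "x mod l = y mod l" using cyc_ne[OF c] l by (meson mod_less_divisor)
  hence "(x + d) mod l = (y + d) mod l" by (metis mod_add_left_eq)
  thus ?thesis using cyc_mod[OF c] by metis
qed

lemma cyc_SHb: "cyc V E f l \<Longrightarrow> f (x + d) = f (y + d) \<Longrightarrow> f x = f y"
proof -
  assume c: "cyc V E f l" and e: "f (x + d) = f (y + d)"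
  have l: "1 \<le> l" using cyc_l[OF c] by simp
  have dl: "d \<le> d * l" using l by simp
  have "f (x + d + (d*l - d)) = f (y + d + (d*l - d))" using cyc_SH[OF c e] .
  moreover have "x + d + (d*l - d) = x + d * l" "y + d + (d*l - d) = y + d * l" using dl by auto
  ultimately show ?thesis using cyc_mult[OF c] by metis
qed

lemma cyc_rot: "cyc V E f l \<Longrightarrow> cyc V E (\<lambda>i. f (i + r)) l"
proof -
  assume c: "cyc V E f l"
  have p: "\<And>i. f (i + l) = f i" and d: "\<And>i d. 0 < d \<Longrightarrow> d < l \<Longrightarrow> f (i + d) \<noteq> f i"
    and v: "\<And>i. f i \<in> V" and e: "\<And>i. E (f i) (f (Suc i))" and l: "3 \<le> l"
    using c unfolding cyc_def by blast+
  show ?thesis unfolding cyc_def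
  proof (intro conjI allI impI)
    fix i show "f (i + l + r) = f (i + r)" using p[of "i + r"] by (simp add: ac_simps)
  next
    fix i d :: nat assume "0 < d" "d < l"
    thus "f (i + d + r) \<noteq> f (i + r)" using d[of d "i + r"] by (simp add: ac_simps)
  next
    fix i show "f (i + r) \<in> V" using v .
  next
    fix i show "E (f (i + r)) (f (Suc i + r))" using e[of "i + r"] by simp
  qed (rule l)
qed

lemma indc_rot: "indc V E f l \<Longrightarrow> indc V E (\<lambda>i. f (i + r)) l"
proof -
  assume a: "indc V E f l"
  have ch: "\<And>i j. E (f i) (f j) \<Longrightarrow> f j = f (Suc i) \<or> f i = f (Suc j)" using a unfolding indc_def by blast
  show ?thesis unfolding indc_def
  proof (intro conjI allI impI)
    show "cyc V E (\<lambda>i. f (i + r)) l" using a cyc_rot unfolding indc_def by blast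
    show "4 \<le> l" using a unfolding indc_def by blast
    fix i j assume "E (f (i + r)) (f (j + r))"
    thus "f (j + r) = f (Suc i + r) \<or> f (i + r) = f (Suc j + r)" using ch by simp
  qed
qed

lemma cyc_range: "cyc V E f l \<Longrightarrow> range f = f ` {..<l}"
proof -
  assume c: "cyc V E f l"
  have l: "0 < l" using cyc_l[OF c] by simp
  { fix i
    have "f i = f (i mod l)" using cyc_mod[OF c] by simp
    moreover have "i mod l \<in> {..<l}" using l by simp
    ultimately have "f i \<in> f ` {..<l}" by blast }
  thus ?thesis by blast
qed

lemma cyc_fin: "cyc V E f l \<Longrightarrow> finite (range f)"
  using cyc_range by (metis finite_imageI finite_lessThan)

lemma range_rot: "cyc V E f l \<Longrightarrow> range (\<lambda>i. f (i + r)) = range f"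
proof -
  assume c: "cyc V E f l"
  have l: "1 \<le> l" using cyc_l[OF c] by simp
  { fix j
    have "r \<le> r * l" using l by (metis mult.right_neutral mult_le_mono2)
    hence "j + r * l - r + r = j + r * l" by linarith
    hence "f (j + r * l - r + r) = f j" using cyc_mult[OF c] by simp
    hence "f j \<in> range (\<lambda>i. f (i + r))" by (metis rangeI) }
  thus ?thesis by auto
qed

lemma indc_nonadj: "indc V E f l \<Longrightarrow> 2 \<le> d \<Longrightarrow> d + 2 \<le> l \<Longrightarrow> \<not> E (f a) (f (a + d))"
proof
  assume i: "indc V E f l" and d: "2 \<le> d" "d + 2 \<le> l" and e: "E (f a) (f (a + d))"
  have c: "cyc V E f l" using indc_cyc[OF i] .
  have dd: "\<And>i d. 0 < d \<Longrightarrow> d < l \<Longrightarrow> f (i + d) \<noteq> f i" using cyc_dist[OF c] by blast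
  have "f (a + d) = f (Suc a) \<or> f a = f (Suc (a + d))" using indc_ch[OF i e] .
  thus False
  proof
    assume asm: "f (a + d) = f (Suc a)"
    have X: "Suc a + (d - 1) = a + d" using d by simp
    have "f (Suc a + (d - 1)) = f (Suc a)" using asm by (simp only: X)
    moreover have "f (Suc a + (d - 1)) \<noteq> f (Suc a)" using dd[of "d - 1" "Suc a"] d by simp
    ultimately show False by blast
  next
    assume asm: "f a = f (Suc (a + d))"
    have "f (a + Suc d) = f a" using asm by (simp only: add_Suc_right)
    moreover have "f (a + Suc d) \<noteq> f a" using dd[of "Suc d" a] d by simp
    ultimately show False by blast
  qed
qed

lemma indc_tri: "graph V E \<Longrightarrow> indc V E f l \<Longrightarrow> E (f i) (f k) \<Longrightarrow> E (f (Suc i)) (f k) \<Longrightarrow> False"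
proof -
  assume g: "graph V E" and ind: "indc V E f l" and e1: "E (f i) (f k)" and e2: "E (f (Suc i)) (f k)"
  have c: "cyc V E f l" and l4: "4 \<le> l" using indc_cyc[OF ind] indc_4[OF ind] by auto
  have ch: "\<And>i j. E (f i) (f j) \<Longrightarrow> f j = f (Suc i) \<or> f i = f (Suc j)" using indc_ch[OF ind] by blast
  have dd: "\<And>i d. 0 < d \<Longrightarrow> d < l \<Longrightarrow> f (i + d) \<noteq> f i" using cyc_dist[OF c] by blast
  have "f k \<noteq> f (Suc i)"
  proof
    assume "f k = f (Suc i)"
    then have "E (f (Suc i)) (f (Suc i))" using e2 by simp
    thus False using graph_irr[OF g] by blast
  qed
  then have a: "f i = f (Suc k)" using ch[OF e1] by blast
  have "f k = f (Suc (Suc i)) \<or> f (Suc i) = f (Suc k)" using ch[OF e2] .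
  moreover have "f (Suc i) \<noteq> f (Suc k)"
  proof
    assume "f (Suc i) = f (Suc k)"
    hence "f i = f k" using cyc_SHb[OF c, of i 1 k] by simp
    hence "E (f i) (f i)" using e1 by simp
    thus False using graph_irr[OF g] by blast
  qed
  ultimately have "f k = f (i + 2)" by simp
  hence "f (k + 1) = f (i + 2 + 1)" using cyc_SH[OF c] by blast
  hence "f i = f (i + 3)" using a by (simp add: eval_nat_numeral)
  thus False using dd[of 3 i] l4 by simp
qed


lemma modlt: "a < l \<Longrightarrow> c \<le> (l::nat) \<Longrightarrow> (a + c) mod l = (if a + c < l then a + c else a + c - l)"
proof (cases "a + c < l")
  case True thus ?thesis by simp
next
  case False
  assume "a < l" "c \<le> l"
  hence "a + c - l < l" by arith
  moreover have "(a + c) mod l = (a + c - l) mod l" using False le_mod_geq by (metis not_less)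
  ultimately show ?thesis using False by simp
qed

lemma mod_neq: "0 < e \<Longrightarrow> e < (n::nat) \<Longrightarrow> (k + e) mod n \<noteq> k mod n"
proof
  assume e: "0 < e" "e < n" and eq: "(k + e) mod n = k mod n"
  have r: "k mod n < n" using e by simp
  have "(k + e) mod n = (k mod n + e) mod n" by (simp add: mod_add_left_eq)
  also have "\<dots> = (if k mod n + e < n then k mod n + e else k mod n + e - n)" using modlt[OF r, of e] e by simp
  finally show False using eq e r by (auto split: if_splits)
qed

lemma range_mod: "0 < (L::nat) \<Longrightarrow> range (\<lambda>k. hb (k mod L)) = hb ` {..<L}"
proof
  assume L: "0 < L"
  show "range (\<lambda>k. hb (k mod L)) \<subseteq> hb ` {..<L}"
  proof
    fix z assume "z \<in> range (\<lambda>k. hb (k mod L))"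
    then obtain k where "z = hb (k mod L)" by auto
    moreover have "k mod L \<in> {..<L}" using L by simp
    ultimately show "z \<in> hb ` {..<L}" by blast
  qed
  show "hb ` {..<L} \<subseteq> range (\<lambda>k. hb (k mod L))"
  proof
    fix z assume "z \<in> hb ` {..<L}"
    then obtain a where "a < L" "z = hb a" by auto
    hence "z = hb (a mod L)" by simp
    thus "z \<in> range (\<lambda>k. hb (k mod L))" by blast
  qed
qed

lemma star_graph: assumes "graph V E" shows "graph (star_vertices V E) (star_adj V E)"
  unfolding graph_def
proof (intro allI impI)
  fix x y assume "star_adj V E x y"
  thus "x \<in> star_vertices V E \<and> y \<in> star_vertices V E \<and> star_adj V E y x \<and> x \<noteq> y"
    using assms by (cases x; cases y) (auto simp: star_vertices_def graph_def)
qed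

lemma clique_ext: assumes "clique V E S" shows "\<exists>m. maximal_clique V E m \<and> S \<subseteq> m"
proof -
  let ?A = "{D. clique V E D \<and> S \<subseteq> D}"
  have "\<exists>M\<in>?A. \<forall>X\<in>?A. M \<subseteq> X \<longrightarrow> X = M"
  proof (rule subset_Zorn_nonempty)
    show "?A \<noteq> {}" using assms by blast
  next
    fix C assume ne: "C \<noteq> {}" and ch: "subset.chain ?A C"
    have sub: "C \<subseteq> ?A" and lin: "\<forall>X\<in>C. \<forall>Y\<in>C. X \<subseteq> Y \<or> Y \<subseteq> X" using ch by (auto simp: subset_chain_def)
    have "clique V E (\<Union>C)" unfolding clique_def
    proof (intro conjI ballI impI)
      show "\<Union>C \<subseteq> V" using sub by (auto simp: clique_def)
    next
      fix x y assume x: "x \<in> \<Union>C" and y: "y \<in> \<Union>C" and xy: "x \<noteq> y"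
      then obtain X Y where X: "X \<in> C" "x \<in> X" and Y: "Y \<in> C" "y \<in> Y" by blast
      show "E x y"
      proof (cases "X \<subseteq> Y")
        case True thus ?thesis using X Y xy sub by (auto simp: clique_def)
      next
        case False hence "Y \<subseteq> X" using lin X Y by blast
        thus ?thesis using X Y xy sub by (auto simp: clique_def)
      qed
    qed
    moreover have "S \<subseteq> \<Union>C" using ne sub by blast
    ultimately show "\<Union>C \<in> ?A" by blast
  qed
  then obtain M where M: "M \<in> ?A" "\<forall>X\<in>?A. M \<subseteq> X \<longrightarrow> X = M" by blast
  have "maximal_clique V E M" unfolding maximal_clique_def using M by blast
  thus ?thesis using M by blast
qed

lemma mc_adj: "maximal_clique V E m \<Longrightarrow> a \<in> m \<Longrightarrow> b \<in> m \<Longrightarrow> a \<noteq> b \<Longrightarrow> E a b"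
  by (simp add: maximal_clique_def clique_def)
lemma mc_V: "maximal_clique V E m \<Longrightarrow> a \<in> m \<Longrightarrow> a \<in> V"
  by (auto simp add: maximal_clique_def clique_def)

lemma triM:
  assumes g: "graph V E"
    and H: "\<forall>m m'. maximal_clique V E m \<and> maximal_clique V E m' \<and> m \<noteq> m' \<longrightarrow>
           (\<forall>x y. x \<in> m \<inter> m' \<and> y \<in> m \<inter> m' \<longrightarrow> x = y)"
    and m: "maximal_clique V E m" and a: "a \<in> m" and b: "b \<in> m" and ab: "a \<noteq> b"
    and ac: "E a c" and bc: "E b c"
  shows "c \<in> m"
proof -
  have eab: "E a b" using mc_adj[OF m a b ab] .
  have "clique V E {a, b, c}" unfolding clique_def
    using eab ac bc graph_V[OF g] graph_sym[OF g] by blast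
  then obtain m' where m': "maximal_clique V E m'" "{a,b,c} \<subseteq> m'" using clique_ext by blast
  have "m' = m" using H m m' a b ab by blast
  thus ?thesis using m' by blast
qed

lemma L1:
  assumes g: "graph V E" and li: "lic V E f l"
  shows "\<exists>h l'. indc V E h l' \<and> l' \<le> l \<and> range h \<subseteq> range f"
proof -
  have c: "cyc V E f l" using lic_cyc[OF li] .
  have l3: "3 \<le> l" using cyc_l[OF c] .
  show ?thesis
  proof (cases "\<exists>i d. 2 \<le> d \<and> d + 2 \<le> l \<and> E (f i) (f (i + d))")
    case False
    have l4: "4 \<le> l"
    proof (rule ccontr)
      assume "\<not> 4 \<le> l" hence l: "l = 3" using l3 by simp
      have "E (f 2) (f (Suc 2))" using cyc_E[OF c] .
      moreover have "f (Suc 2) = f 0" using cyc_per[OF c, of 0] l by (simp add: eval_nat_numeral)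
      ultimately have "E (f 0) (f (Suc (Suc 0)))" using graph_sym[OF g] by (simp add: eval_nat_numeral)
      thus False using lic_2[OF li, of 0] by simp
    qed
    have IC: "f b = f (Suc a) \<or> f a = f (Suc b)" if ab: "a < b" "b < l" "E (f a) (f b)" for a b
    proof -
      define d where "d = b - a"
      have bd: "b = a + d" using ab d_def by simp
      show ?thesis
      proof (cases "d = 1")
        case True thus ?thesis using bd by simp
      next
        case d1: False
        show ?thesis
        proof (cases "d + 1 = l")
          case True
          hence "Suc b = a + l" using bd by simp
          hence "f (Suc b) = f a" using cyc_per[OF c] by simp
          thus ?thesis by simp
        next
          case False
          have "2 \<le> d" "d + 2 \<le> l" using d1 False ab d_def by auto
          thus ?thesis using \<open>\<not> (\<exists>i d. _)\<close> ab bd by blast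
        qed
      qed
    qed
    have "indc V E f l" unfolding indc_def
    proof (intro conjI allI impI)
      show "cyc V E f l" using c .
      show "4 \<le> l" using l4 .
      fix i j assume e: "E (f i) (f j)"
      define a where "a = i mod l"
      define b where "b = j mod l"
      have fa: "f a = f i" "f b = f j" using cyc_mod[OF c] a_def b_def by auto
      have al: "a < l" "b < l" using a_def b_def l3 by auto
      have fa1: "f (Suc a) = f (Suc i)" "f (Suc b) = f (Suc j)"
        using cyc_SH[OF c fa(1), of 1] cyc_SH[OF c fa(2), of 1] by auto
      have "a \<noteq> b" using e fa graph_irr[OF g] by metis
      hence "a < b \<or> b < a" by arith
      thus "f j = f (Suc i) \<or> f i = f (Suc j)"
      proof
        assume "a < b" thus ?thesis using IC[of a b] al e fa fa1 by auto
      next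
        assume "b < a"
        moreover have "E (f b) (f a)" using graph_sym[OF g] e fa by simp
        ultimately show ?thesis using IC[of b a] al fa fa1 by auto
      qed
    qed
    thus ?thesis by blast
  next
    case True
    let ?P = "\<lambda>d. \<exists>i. 2 \<le> d \<and> d + 2 \<le> l \<and> E (f i) (f (i + d))"
    have "\<exists>d. ?P d" using True by blast
    then obtain d where Pd: "?P d" and mn: "\<forall>e<d. \<not> ?P e" using exists_least_iff[of ?P] by blast
    then obtain i where d2: "2 \<le> d" and dl: "d + 2 \<le> l" and ch: "E (f i) (f (i + d))" by blast
    have d3: "3 \<le> d"
    proof (rule ccontr)
      assume "\<not> 3 \<le> d" hence "d = 2" using d2 by simp
      thus False using ch lic_2[OF li, of i] by (simp add: eval_nat_numeral)
    qed
    have IC: "b = Suc a \<or> (a = 0 \<and> b = d)" if ab: "a < b" "b \<le> d" "E (f (i + a)) (f (i + b))" for a b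
    proof (rule ccontr)
      assume nn: "\<not> (b = Suc a \<or> (a = 0 \<and> b = d))"
      define e where "e = b - a"
      have "2 \<le> e" "e < d" using nn ab e_def by auto
      moreover have "E (f (i + a)) (f ((i + a) + e))" using ab e_def by (simp add: add.assoc)
      ultimately have "?P e" using dl by auto
      thus False using mn \<open>e < d\<close> by blast
    qed
    define h where "h = (\<lambda>k. f (i + k mod (d + 1)))"
    have hm: "h k = f (i + k mod (d + 1))" for k using h_def by simp
    have hS: "h (Suc k) = (if k mod (d + 1) = d then f i else f (i + Suc (k mod (d + 1))))" for k
      unfolding hm by (simp add: mod_Suc)
    have ne: "f (i + a) \<noteq> f (i + b)" if "a \<noteq> b" "a \<le> d" "b \<le> d" for a b
    proof
      assume "f (i + a) = f (i + b)"
      hence "f (a + i) = f (b + i)" by (simp add: add.commute)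
      hence "f a = f b" using cyc_SHb[OF c] by blast
      thus False using cyc_ne[OF c, of a b] that dl by auto
    qed
    have cy: "cyc V E h (d + 1)" unfolding cyc_def
    proof (intro conjI allI impI)
      show "3 \<le> d + 1" using d3 by simp
    next
      fix k show "h (k + (d + 1)) = h k" by (simp only: hm mod_add_self2)
    next
      fix k e :: nat assume "0 < e" "e < d + 1"
      hence "(k + e) mod (d + 1) \<noteq> k mod (d + 1)" using mod_neq by blast
      thus "h (k + e) \<noteq> h k" unfolding hm using ne by (metis less_Suc_eq_le mod_less_divisor zero_less_Suc Suc_eq_plus1)
    next
      fix k show "h k \<in> V" unfolding hm using cyc_V[OF c] .
    next
      fix k show "E (h k) (h (Suc k))"
      proof (cases "k mod (d + 1) = d")
        case True thus ?thesis unfolding hS using hm graph_sym[OF g, OF ch] by simp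
      next
        case False thus ?thesis unfolding hS using hm cyc_E[OF c, of "i + k mod (d+1)"] by simp
      qed
    qed
    have "indc V E h (d + 1)" unfolding indc_def
    proof (intro conjI allI impI)
      show "cyc V E h (d + 1)" using cy .
      show "4 \<le> d + 1" using d3 by simp
      fix j k assume e: "E (h j) (h k)"
      define a where "a = j mod (d + 1)"
      define b where "b = k mod (d + 1)"
      have ab: "a \<le> d" "b \<le> d" using a_def b_def by auto
      have e2: "E (f (i + a)) (f (i + b))" using e hm a_def b_def by simp
      have "a \<noteq> b" using e2 graph_irr[OF g] by metis
      hence "a < b \<or> b < a" by arith
      thus "h k = h (Suc j) \<or> h j = h (Suc k)"
      proof
        assume "a < b"
        hence "b = Suc a \<or> (a = 0 \<and> b = d)" using IC ab e2 by blast
        thus ?thesis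
        proof
          assume as: "b = Suc a"
          hence "a \<noteq> d" using ab by simp
          hence "h (Suc j) = f (i + Suc a)" using hS[of j] a_def by simp
          hence "h k = h (Suc j)" using as hm b_def by simp
          thus ?thesis by blast
        next
          assume as: "a = 0 \<and> b = d"
          hence "h (Suc k) = f i" using hS[of k] b_def by simp
          hence "h j = h (Suc k)" using as hm a_def by simp
          thus ?thesis by blast
        qed
      next
        assume "b < a"
        moreover have "E (f (i + b)) (f (i + a))" using graph_sym[OF g e2] .
        ultimately have "a = Suc b \<or> (b = 0 \<and> a = d)" using IC ab by blast
        thus ?thesis
        proof
          assume as: "a = Suc b"
          hence "b \<noteq> d" using ab by simp
          hence "h (Suc k) = f (i + Suc b)" using hS[of k] b_def by simp
          hence "h j = h (Suc k)" using as hm a_def by simp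
          thus ?thesis by blast
        next
          assume as: "b = 0 \<and> a = d"
          hence "h (Suc j) = f i" using hS[of j] a_def by simp
          hence "h k = h (Suc j)" using as hm b_def by simp
          thus ?thesis by blast
        qed
      qed
    qed
    moreover have "range h \<subseteq> range f" unfolding h_def by auto
    moreover have "d + 1 \<le> l" using dl by simp
    ultimately show ?thesis by blast
  qed
qed


lemma mk_lic:
  assumes L: "3 \<le> (L::nat)"
    and inj: "\<And>a b. a < L \<Longrightarrow> b < L \<Longrightarrow> hb a = hb b \<Longrightarrow> a = b"
    and V: "\<And>a. a < L \<Longrightarrow> hb a \<in> V"
    and E: "\<And>a. a < L \<Longrightarrow> E (hb a) (hb ((a + 1) mod L))"
    and N: "\<And>a. a < L \<Longrightarrow> \<not> E (hb a) (hb ((a + 2) mod L))"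
  shows "lic V E (\<lambda>k. hb (k mod L)) L"
proof -
  have L0: "0 < L" using L by simp
  show ?thesis unfolding lic_def cyc_def
  proof (intro conjI allI impI)
    show "3 \<le> L" using L .
  next
    fix i show "hb ((i + L) mod L) = hb (i mod L)" by simp
  next
    fix i d :: nat assume "0 < d" "d < L"
    hence "(i + d) mod L \<noteq> i mod L" using mod_neq by blast
    thus "hb ((i + d) mod L) \<noteq> hb (i mod L)" using inj L0 by (meson mod_less_divisor)
  next
    fix i show "hb (i mod L) \<in> V" using V L0 by simp
  next
    fix i
    have "Suc i mod L = (i mod L + 1) mod L" by (simp add: mod_Suc_eq)
    thus "E (hb (i mod L)) (hb (Suc i mod L))" using E[of "i mod L"] L0 by simp
  next
    fix i
    have "Suc (Suc i) mod L = (i mod L + 2) mod L" by (metis add_2_eq_Suc' mod_add_left_eq)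
    thus "\<not> E (hb (i mod L)) (hb (Suc (Suc i) mod L))" using N[of "i mod L"] L0 by simp
  qed
qed

lemma indc_tri3: "graph V E \<Longrightarrow> indc V E f l \<Longrightarrow> E (f i) (f j) \<Longrightarrow> E (f i) (f k) \<Longrightarrow> E (f j) (f k) \<Longrightarrow> False"
proof -
  assume g: "graph V E" and ind: "indc V E f l" and e: "E (f i) (f j)" "E (f i) (f k)" "E (f j) (f k)"
  from indc_ch[OF ind e(1)] show False
  proof
    assume "f j = f (Suc i)" thus False using indc_tri[OF g ind e(2)] e(3) by simp
  next
    assume "f i = f (Suc j)" thus False using indc_tri[OF g ind e(3)] e(2) by simp
  qed
qed


abbreviation "HYP V E \<equiv> (\<forall>m m'. maximal_clique V E m \<and> maximal_clique V E m' \<and> m \<noteq> m' \<longrightarrow>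
           (\<forall>x y. x \<in> m \<inter> m' \<and> y \<in> m \<inter> m' \<longrightarrow> x = y))"

lemma SV_Inl: "Inl a \<in> star_vertices V E \<longleftrightarrow> a \<in> V"
  by (auto simp: star_vertices_def)

lemma nn02: "(0::nat) + 2 = 2" by simp
lemma nn12: "(1::nat) + 2 = 3" by simp
lemma nn22: "(2::nat) + 2 = 4" by simp
lemma nn32: "(3::nat) + 2 = 5" by simp
lemma nn13: "(1::nat) + 3 = 4" by simp
lemma nn23: "(2::nat) + 3 = 5" by simp
lemma le23: "(2::nat) \<le> 3" by simp

lemma stepB:
  assumes g: "graph V E" and H: "HYP V E"
    and ind: "indc (star_vertices V E) (star_adj V E) f l"
    and f1: "f 1 = Inl u" and f2: "f 2 = Inr m"
  shows "\<exists>h l'. lic (star_vertices V E) (star_adj V E) h l' \<and> l' \<le> l \<and>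
           range h \<inter> range Inr \<subset> range f \<inter> range Inr"
proof -
  let ?SV = "star_vertices V E" and ?SA = "star_adj V E"
  have SG: "graph ?SV ?SA" using star_graph[OF g] .
  have c: "cyc ?SV ?SA f l" using indc_cyc[OF ind] .
  have l4: "4 \<le> l" using indc_4[OF ind] .
  have NA: "\<And>d a b. 2 \<le> d \<Longrightarrow> d + 2 \<le> l \<Longrightarrow> a + d = b \<Longrightarrow> \<not> ?SA (f a) (f b)" using indc_nonadj[OF ind] by blast
  have l22: "2 + 2 \<le> l" using l4 by linarith
  have na13: "\<not> ?SA (f 1) (f 3)" using NA[OF order.refl l22 nn12] .
  have na02: "\<not> ?SA (f 0) (f 2)" using NA[OF order.refl l22 nn02] .
  have na24: "\<not> ?SA (f 2) (f 4)" using NA[OF order.refl l22 nn22] .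
  have naa: "\<not> ?SA (f a) (f (a + 2))" for a using NA[OF order.refl l22 refl] .
  have na3: "\<not> ?SA (f (a + 1)) (f (a + 3))" for a using NA[OF order.refl l22, of "a + 1" "a + 3"] by simp
  have D: "\<And>i d. 0 < d \<Longrightarrow> d < l \<Longrightarrow> f (i + d) \<noteq> f i" using cyc_dist[OF c] by blast
  have NE: "\<And>p q. p < l \<Longrightarrow> q < l \<Longrightarrow> p \<noteq> q \<Longrightarrow> f p \<noteq> f q" using cyc_ne[OF c] by blast
  have EE: "\<And>i. ?SA (f i) (f (Suc i))" using cyc_E[OF c] by blast
  have e12: "?SA (f 1) (f 2)" using EE[of 1] by (simp add: numeral_2_eq_2)
  hence uV: "u \<in> V" and mm: "maximal_clique V E m" and um: "u \<in> m" using f1 f2 by auto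
  obtain m' where f3: "f 3 = Inr m'"
  proof (cases "f 3")
    case (Inl w0)
    have "?SA (f 2) (f 3)" using EE[of 2] by (simp add: eval_nat_numeral)
    hence w0m: "w0 \<in> m" using f2 Inl by simp
    have "f 3 \<noteq> f 1" using NE[of 3 1] l4 by simp
    hence "u \<noteq> w0" using f1 Inl by simp
    hence "E u w0" using mc_adj[OF mm um w0m] by simp
    hence "?SA (f 1) (f 3)" using f1 Inl by simp
    moreover have "\<not> ?SA (f 1) (f 3)" by (rule na13)
    ultimately show ?thesis by blast
  next
    case (Inr m') thus ?thesis using that by blast
  qed
  have "?SA (f 2) (f 3)" using EE[of 2] by (simp add: eval_nat_numeral)
  hence mm': "maximal_clique V E m'" and mne: "m \<noteq> m'" and mi: "m \<inter> m' \<noteq> {}" using f2 f3 by auto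
  define x where "x = (SOME x. x \<in> m \<inter> m')"
  have xm: "x \<in> m" and xm': "x \<in> m'" using mi unfolding x_def by (metis IntE some_in_eq)+
  have xV: "x \<in> V" using mc_V[OF mm xm] .
  have nx: "f k \<noteq> Inl x" for k
  proof
    assume fk: "f k = Inl x"
    have "?SA (f 2) (f k)" using f2 fk xV mm xm by simp
    moreover have "?SA (f (Suc 2)) (f k)" using f3 fk xV mm' xm' by (simp add: eval_nat_numeral)
    ultimately show False using indc_tri[OF SG ind] by blast
  qed
  have ux: "u \<noteq> x" using nx[of 1] f1 by simp
  have Eux: "E u x" using mc_adj[OF mm um xm ux] .
  have n13: "\<not> ?SA (f 1) (f 3)" by (rule na13)
  have n0: "\<not> ?SA (f 0) (Inl x)"
  proof (cases "f 0")
    case (Inl y)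
    show ?thesis
    proof
      assume "?SA (f 0) (Inl x)"
      hence Eyx: "E y x" using Inl by simp
      have "?SA (f 0) (f 1)" using EE[of 0] by simp
      hence Eyu: "E y u" using Inl f1 by simp
      have "y \<in> m" using triM[OF g H mm um xm ux graph_sym[OF g Eyu] graph_sym[OF g Eyx]] .
      moreover have "y \<in> V" using graph_V[OF g Eyx] by blast
      ultimately have "?SA (f 0) (f 2)" using Inl f2 mm by simp
      thus False using na02 by blast
    qed
  next
    case (Inr m0)
    show ?thesis
    proof
      assume "?SA (f 0) (Inl x)"
      hence xm0: "x \<in> m0" and mm0: "maximal_clique V E m0" using Inr by auto
      have "f 2 \<noteq> f 0" using NE[of 2 0] l4 by simp
      hence "m0 \<noteq> m" using Inr f2 by auto
      hence "?SA (f 0) (f 2)" using Inr f2 mm mm0 xm xm0 by auto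
      thus False using na02 by blast
    qed
  qed
  have n0': "\<not> ?SA (Inl x) (f 0)" using n0 graph_sym[OF SG] by blast
  have f2Inr: "f 2 \<in> range f \<inter> range Inr" using f2 by (metis IntI rangeI)
  have fin: "finite (range f)" using cyc_fin[OF c] .
  show ?thesis
  proof (cases "f 4")
    case (Inr m4)
    have n4: "\<not> ?SA (Inl x) (f 4)"
    proof
      assume "?SA (Inl x) (f 4)"
      hence xm4: "x \<in> m4" and mm4: "maximal_clique V E m4" using Inr by auto
      have "f 4 \<noteq> f 2"
      proof (cases "l = 4")
        case True
        hence "f 4 = f 0" using cyc_per[OF c, of 0] by simp
        thus ?thesis using NE[of 0 2] l4 by simp
      next
        case False thus ?thesis using NE[of 4 2] l4 by simp
      qed
      hence "m4 \<noteq> m" using Inr f2 by auto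
      hence "?SA (f 2) (f 4)" using Inr f2 mm mm4 xm xm4 by auto
      thus False using na24 by blast
    qed
    define hb where "hb = (\<lambda>a. if a = 2 then Inl x else f a)"
    have S1: "hb ((a + 1) mod l) = (if a = 1 then Inl x else f (a + 1))" if a: "a < l" for a
    proof -
      have fm: "f ((a + 1) mod l) = f (a + 1)" using cyc_mod[OF c] by blast
      have ne2: "(a + 1) mod l = 2 \<longleftrightarrow> a = 1"
      proof (cases "a + 1 < l")
        case True thus ?thesis by simp
      next
        case False hence "a + 1 = l" using a by simp
        hence "(a + 1) mod l = 0" by simp
        thus ?thesis using \<open>a + 1 = l\<close> l4 by simp
      qed
      show ?thesis
      proof (cases "a = 1")
        case True thus ?thesis using ne2 unfolding hb_def by simp
      next
        case False
        hence "hb ((a + 1) mod l) = f ((a + 1) mod l)" using ne2 unfolding hb_def by simp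
        thus ?thesis using fm False by simp
      qed
    qed
    have S2: "hb ((a + 2) mod l) = (if a = 0 then Inl x else f (a + 2))" if a: "a < l" for a
    proof -
      have fm: "f ((a + 2) mod l) = f (a + 2)" using cyc_mod[OF c] by blast
      have md: "(a + 2) mod l = (if a + 2 < l then a + 2 else a + 2 - l)" using modlt[of a l 2] a l4 by simp
      have ne2: "(a + 2) mod l = 2 \<longleftrightarrow> a = 0"
      proof (cases "a + 2 < l")
        case True thus ?thesis using md by simp
      next
        case False
        hence "(a + 2) mod l = a + 2 - l" "a + 2 - l < 2" using md a by auto
        moreover have "a \<noteq> 0" using False l4 by simp
        ultimately show ?thesis by simp
      qed
      show ?thesis
      proof (cases "a = 0")
        case True thus ?thesis using ne2 unfolding hb_def by simp
      next
        case False
        hence "hb ((a + 2) mod l) = f ((a + 2) mod l)" using ne2 unfolding hb_def by simp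
        thus ?thesis using fm False by simp
      qed
    qed
    have hbf: "hb a = f a" if "a \<noteq> 2" for a using that unfolding hb_def by simp
    have hb2: "hb 2 = Inl x" unfolding hb_def by simp
    have li: "lic ?SV ?SA (\<lambda>k. hb (k mod l)) l"
    proof (rule mk_lic)
      show "3 \<le> l" using l4 by simp
    next
      fix a b assume ab: "a < l" "b < l" "hb a = hb b"
      show "a = b"
      proof (rule ccontr)
        assume nab: "a \<noteq> b"
        show False
        proof (cases "a = 2")
          case True
          hence "hb b = Inl x" "hb b = f b" using ab(3) hb2 hbf nab by auto
          thus False using nx by simp
        next
          case a2: False
          show False
          proof (cases "b = 2")
            case True
            hence "hb a = Inl x" "hb a = f a" using ab(3) hb2 hbf a2 by auto
            thus False using nx by simp
          next
            case False
            hence "f a = f b" using ab(3) hbf a2 by simp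
            thus False using NE[of a b] ab nab by blast
          qed
        qed
      qed
    next
      fix a show "hb a \<in> ?SV" unfolding hb_def using cyc_V[OF c] xV by (simp add: SV_Inl)
    next
      fix a assume a: "a < l"
      consider "a = 1" | "a = 2" | "a \<noteq> 1 \<and> a \<noteq> 2" by blast
      thus "?SA (hb a) (hb ((a + 1) mod l))"
      proof cases
        case 1 thus ?thesis unfolding S1[OF a] using hbf[of 1] f1 Eux by simp
      next
        case 2
        have "?SA (Inl x) (f 3)" using f3 xV mm' xm' by simp
        thus ?thesis unfolding S1[OF a] using 2 hb2 by simp
      next
        case 3 thus ?thesis unfolding S1[OF a] using hbf[of a] EE[of a] by simp
      qed
    next
      fix a assume a: "a < l"
      consider "a = 0" | "a = 1" | "a = 2" | "3 \<le> a" by arith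
      thus "\<not> ?SA (hb a) (hb ((a + 2) mod l))"
      proof cases
        case 1 thus ?thesis unfolding S2[OF a] using hbf[of 0] n0 by simp
      next
        case 2
        thus ?thesis unfolding S2[OF a] using 2 hbf[of 1] n13 by (simp add: numeral_eq_Suc)
      next
        case 3
        thus ?thesis unfolding S2[OF a] using 3 hb2 n4 by (simp add: numeral_eq_Suc)
      next
        case 4 thus ?thesis unfolding S2[OF a] using hbf[of a] naa[of a] by simp
      qed
    qed
    have rg: "range (\<lambda>k. hb (k mod l)) = hb ` {..<l}" using range_mod[of l hb] l4 by simp
    have "range (\<lambda>k. hb (k mod l)) \<inter> range Inr \<subseteq> (range f \<inter> range Inr) - {f 2}"
    proof
      fix z assume z: "z \<in> range (\<lambda>k. hb (k mod l)) \<inter> range Inr"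
      then obtain a where a: "a < l" "z = hb a" using rg by auto
      have "a \<noteq> 2" using z a unfolding hb_def by auto
      hence "z = f a" "f a \<noteq> f 2" using a NE[of a 2] l4 unfolding hb_def by auto
      thus "z \<in> (range f \<inter> range Inr) - {f 2}" using z by auto
    qed
    hence "range (\<lambda>k. hb (k mod l)) \<inter> range Inr \<subset> range f \<inter> range Inr" using f2Inr by blast
    thus ?thesis using li by blast
  next
    case (Inl w)
    have "?SA (f 3) (f 4)" using EE[of 3] by (simp add: eval_nat_numeral)
    hence wm': "w \<in> m'" and wV: "w \<in> V" using f3 Inl by auto
    have xw: "x \<noteq> w" using nx[of 4] Inl by simp
    have Exw: "E x w" using mc_adj[OF mm' xm' wm' xw] .
    have l5: "5 \<le> l"
    proof (rule ccontr)
      assume "\<not> 5 \<le> l" hence l: "l = 4" using l4 by simp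
      have "f 4 = f 0" using cyc_per[OF c, of 0] l by simp
      hence "?SA (f 4) (f 1)" using EE[of 0] by simp
      hence Ewu: "E w u" using Inl f1 by simp
      have "w \<in> m" using triM[OF g H mm um xm ux graph_sym[OF g Ewu] Exw] .
      hence "?SA (f 2) (f 4)" using f2 Inl wV mm by simp
      thus False using na24 by blast
    qed
    have l32: "3 + 2 \<le> l" using l5 by linarith
    have n14: "\<not> ?SA (f 1) (f 4)" using NA[OF le23 l32 nn13] .
    have n5: "\<not> ?SA (Inl x) (f 5)"
    proof (cases "f 5")
      case (Inl y)
      show ?thesis
      proof
        assume "?SA (Inl x) (f 5)"
        hence Exy: "E x y" using Inl by simp
        have "?SA (f 4) (f 5)" using EE[of 4] by (simp add: eval_nat_numeral)
        hence Ewy: "E w y" using Inl \<open>f 4 = Inl w\<close> by simp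
        have "y \<in> m'" using triM[OF g H mm' xm' wm' xw Exy Ewy] .
        moreover have "y \<in> V" using graph_V[OF g Exy] by blast
        ultimately have "?SA (f 3) (f 5)" using Inl f3 mm' by simp
        thus False using NA[OF order.refl l22 nn32] by blast
      qed
    next
      case (Inr m5)
      show ?thesis
      proof
        assume "?SA (Inl x) (f 5)"
        hence xm5: "x \<in> m5" and mm5: "maximal_clique V E m5" using Inr by auto
        have "f 5 \<noteq> f 2"
        proof (cases "l = 5")
          case True
          hence "f 5 = f 0" using cyc_per[OF c, of 0] by simp
          thus ?thesis using NE[of 0 2] l5 by simp
        next
          case False thus ?thesis using NE[of 5 2] l5 by simp
        qed
        hence "m5 \<noteq> m" using Inr f2 by auto
        hence "?SA (f 2) (f 5)" using Inr f2 mm mm5 xm xm5 by auto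
        thus False using NA[OF le23 l32 nn23] by blast
      qed
    qed
    define L where "L = l - 1"
    have L4: "4 \<le> L" and lL: "l = L + 1" using l5 L_def by auto
    define hb where "hb = (\<lambda>a. if a = 2 then Inl x else if a \<le> 1 then f a else f (a + 1))"
    have fl: "f (L + 1) = f 0" "f (L + 2) = f 1" using cyc_per[OF c, of 0] cyc_per[OF c, of 1] lL
      by (simp_all add: ac_simps)
    have S1: "hb ((a + 1) mod L) = (if a = 1 then Inl x else if a = 0 then f 1 else f (a + 2))" if a: "a < L" for a
    proof (cases "a + 1 < L")
      case True
      hence "(a + 1) mod L = a + 1" by simp
      thus ?thesis unfolding hb_def using True by auto
    next
      case False
      hence aL: "a + 1 = L" using a by simp
      hence "(a + 1) mod L = 0" by simp
      moreover have "a + 2 = L + 1" using aL by simp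
      ultimately show ?thesis unfolding hb_def using aL L4 fl by auto
    qed
    have S2: "hb ((a + 2) mod L) = (if a = 0 then Inl x else f (a + 3))" if a: "a < L" for a
    proof -
      have md: "(a + 2) mod L = (if a + 2 < L then a + 2 else a + 2 - L)" using modlt[of a L 2] a L4 by simp
      consider "a + 2 < L" | "a + 2 = L" | "a + 2 = L + 1" using a by arith
      thus ?thesis
      proof cases
        case 1 thus ?thesis using md unfolding hb_def by (simp add: numeral_eq_Suc)
      next
        case 2
        have m0: "(a + 2) mod L = 0" using 2 by simp
        have e3: "a + 3 = L + 1" using 2 by simp
        have "f (a + 3) = f (L + 1)" by (simp only: e3)
        hence fa: "f (a + 3) = f 0" using fl(1) by simp
        have "a \<noteq> 0" using 2 L4 by simp
        thus ?thesis unfolding m0 using fa unfolding hb_def by simp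
      next
        case 3
        have m0: "(a + 2) mod L = 1" using 3 L4 md by simp
        have e3: "a + 3 = L + 2" using 3 by simp
        have "f (a + 3) = f (L + 2)" by (simp only: e3)
        hence fa: "f (a + 3) = f 1" using fl(2) by simp
        have "a \<noteq> 0" using 3 L4 by simp
        thus ?thesis unfolding m0 using fa unfolding hb_def by simp
      qed
    qed
    have S0: "hb a = (if a = 2 then Inl x else if a \<le> 1 then f a else f (a + 1))" for a
      unfolding hb_def by simp
    have li: "lic ?SV ?SA (\<lambda>k. hb (k mod L)) L"
    proof (rule mk_lic)
      show "3 \<le> L" using L4 by simp
    next
      fix a b assume ab: "a < L" "b < L" "hb a = hb b"
      show "a = b"
      proof (rule ccontr)
        assume nab: "a \<noteq> b"
        have "a + 1 < l" "b + 1 < l" "a < l" "b < l" using ab lL by auto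
        thus False using ab nab NE nx unfolding hb_def
          by (auto split: if_splits)
      qed
    next
      fix a show "hb a \<in> ?SV" unfolding hb_def using cyc_V[OF c] xV by (simp add: SV_Inl)
    next
      fix a assume a: "a < L"
      consider "a = 0" | "a = 1" | "a = 2" | "3 \<le> a" by arith
      thus "?SA (hb a) (hb ((a + 1) mod L))"
      proof cases
        case 1 thus ?thesis using S1[OF a] S0[of a] EE[of 0] by simp
      next
        case 2 thus ?thesis using S1[OF a] S0[of a] f1 Eux by simp
      next
        case 3 thus ?thesis using S1[OF a] S0[of a] Inl Exw by (simp add: numeral_eq_Suc)
      next
        case 4 thus ?thesis using S1[OF a] S0[of a] EE[of "a + 1"] by simp
      qed
    next
      fix a assume a: "a < L"
      consider "a = 0" | "a = 1" | "a = 2" | "3 \<le> a" by arith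
      thus "\<not> ?SA (hb a) (hb ((a + 2) mod L))"
      proof cases
        case 1 thus ?thesis using S2[OF a] S0[of a] n0 by simp
      next
        case 2 thus ?thesis using S2[OF a] S0[of a] n14 by (simp add: numeral_eq_Suc)
      next
        case 3 thus ?thesis using S2[OF a] S0[of a] n5 by (simp add: numeral_eq_Suc)
      next
        case 4
        have "\<not> ?SA (f (a + 1)) (f (a + 3))" using na3[of a] .
        thus ?thesis using S2[OF a] S0[of a] 4 by simp
      qed
    qed
    have rg: "range (\<lambda>k. hb (k mod L)) = hb ` {..<L}" using range_mod[of L hb] L4 by simp
    have "range (\<lambda>k. hb (k mod L)) \<inter> range Inr \<subseteq> (range f \<inter> range Inr) - {f 2}"
    proof
      fix z assume z: "z \<in> range (\<lambda>k. hb (k mod L)) \<inter> range Inr"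
      then obtain a where a: "a < L" "z = hb a" using rg by auto
      have "a \<noteq> 2" using z a unfolding hb_def by auto
      show "z \<in> (range f \<inter> range Inr) - {f 2}"
      proof (cases "a \<le> 1")
        case True
        hence "z = f a" "f a \<noteq> f 2" using a \<open>a \<noteq> 2\<close> NE[of a 2] l4 unfolding hb_def by auto
        thus ?thesis using z by auto
      next
        case False
        hence "z = f (a + 1)" "f (a + 1) \<noteq> f 2" using a \<open>a \<noteq> 2\<close> NE[of "a + 1" 2] lL unfolding hb_def by auto
        thus ?thesis using z by auto
      qed
    qed
    hence "range (\<lambda>k. hb (k mod L)) \<inter> range Inr \<subset> range f \<inter> range Inr" using f2Inr by blast
    moreover have "L \<le> l" using lL by simp
    ultimately show ?thesis using li by blast
  qed
qed


lemma stepA: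
  assumes g: "graph V E" and H: "HYP V E"
    and ind: "indc (star_vertices V E) (star_adj V E) f l"
    and allr: "\<And>k. \<exists>M. f k = Inr M"
  shows "\<exists>h l'. lic (star_vertices V E) (star_adj V E) h l' \<and> l' \<le> l \<and>
           card (range h \<inter> range Inr) < card (range f \<inter> range Inr)"
proof -
  let ?SV = "star_vertices V E" and ?SA = "star_adj V E"
  have SG: "graph ?SV ?SA" using star_graph[OF g] .
  have c: "cyc ?SV ?SA f l" using indc_cyc[OF ind] .
  have l4: "4 \<le> l" using indc_4[OF ind] .
  have l22: "2 + 2 \<le> l" using l4 by linarith
  have naa: "\<not> ?SA (f a) (f (a + 2))" for a using indc_nonadj[OF ind order.refl l22] .
  define mm where "mm k = projr (f k)" for k
  have fm: "f k = Inr (mm k)" for k using allr[of k] unfolding mm_def by auto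
  have EE: "?SA (f k) (f (Suc k))" for k using cyc_E[OF c] .
  have EE': "?SA (Inr (mm k)) (Inr (mm (Suc k)))" for k using EE[of k] unfolding fm .
  have mmc: "maximal_clique V E (mm k)" and mmn: "mm k \<noteq> mm (Suc k)" and mmi: "mm k \<inter> mm (Suc k) \<noteq> {}" for k
    using EE'[of k] by simp_all
  have mmne: "mm (k + e) \<noteq> mm k" if "0 < e" "e < l" for k e
    using cyc_dist[OF c that, of k] fm by metis
  define xx where "xx k = (SOME z. z \<in> mm k \<inter> mm (Suc k))" for k
  have xx1: "xx k \<in> mm k" and xx2: "xx k \<in> mm (Suc k)" for k
    using mmi[of k] unfolding xx_def by (metis IntE some_in_eq)+
  have xxV: "xx k \<in> V" for k using mc_V[OF mmc xx1] .
  have SAr: "?SA (f p) (f q)" if "mm p \<noteq> mm q" "z \<in> mm p" "z \<in> mm q" for p q z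
    using that fm mmc by auto
  have NA2: "\<not> (z \<in> mm k \<and> z \<in> mm (k + 2))" for k z
  proof
    assume z: "z \<in> mm k \<and> z \<in> mm (k + 2)"
    have "mm (k + 2) \<noteq> mm k" using mmne[of 2 k] l4 by simp
    hence "?SA (f k) (f (k + 2))" using SAr z by metis
    thus False using naa by blast
  qed
  have xxs: "xx k \<noteq> xx (Suc k)" for k
  proof
    assume "xx k = xx (Suc k)"
    hence "xx k \<in> mm (k + 2)" using xx2[of "Suc k"] by simp
    thus False using NA2 xx1 by blast
  qed
  have xxd: "xx (k + e) \<noteq> xx k" if e: "0 < e" "e < l" for k e
  proof
    assume eq: "xx (k + e) = xx k"
    show False
    proof (cases "e = 1")
      case True thus False using eq xxs[of k] by simp
    next
      case False
      have a1: "xx k \<in> mm (k + e)" using eq xx1[of "k + e"] by simp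
      have "mm (k + e) \<noteq> mm k" using mmne e by blast
      hence s1: "?SA (f k) (f (k + e))" using SAr[of k "k + e" "xx k"] xx1 a1 by metis
      have "mm (Suc k + (e - 1)) \<noteq> mm (Suc k)" using mmne[of "e - 1" "Suc k"] e False by simp
      hence "mm (k + e) \<noteq> mm (Suc k)" using e by simp
      hence s2: "?SA (f (Suc k)) (f (k + e))" using SAr[of "Suc k" "k + e" "xx k"] xx2 a1 by metis
      show False using indc_tri[OF SG ind s1 s2] .
    qed
  qed
  have li: "lic ?SV ?SA (\<lambda>k. Inl (xx k)) l" unfolding lic_def cyc_def
  proof (intro conjI allI impI)
    show "3 \<le> l" using l4 by simp
  next
    fix i
    have "f (i + l) = f i" "f (Suc i + l) = f (Suc i)" using cyc_per[OF c] by blast+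
    hence "mm (i + l) = mm i" "mm (Suc (i + l)) = mm (Suc i)" unfolding mm_def by simp_all
    thus "Inl (xx (i + l)) = Inl (xx i)" by (simp add: xx_def)
  next
    fix i d :: nat assume "0 < d" "d < l"
    thus "Inl (xx (i + d)) \<noteq> Inl (xx i)" using xxd by simp
  next
    fix i show "Inl (xx i) \<in> ?SV" using xxV by (simp add: SV_Inl)
  next
    fix i
    have "E (xx i) (xx (Suc i))" using mc_adj[OF mmc xx2[of i] xx1[of "Suc i"] xxs[of i]] .
    thus "?SA (Inl (xx i)) (Inl (xx (Suc i)))" by simp
  next
    fix i
    show "\<not> ?SA (Inl (xx i)) (Inl (xx (Suc (Suc i))))"
    proof
      assume "?SA (Inl (xx i)) (Inl (xx (Suc (Suc i))))"
      hence e: "E (xx i) (xx (Suc (Suc i)))" by simp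
      have a: "E (xx (Suc i)) (xx i)" using mc_adj[OF mmc xx1[of "Suc i"] xx2[of i]] xxs[of i] by metis
      have ne: "xx (Suc i) \<noteq> xx (Suc (Suc i))" using xxs by blast
      have "xx i \<in> mm (Suc (Suc i))"
        using triM[OF g H mmc xx2[of "Suc i"] xx1[of "Suc (Suc i)"] ne a graph_sym[OF g e]] .
      thus False using NA2[of "xx i" i] xx1[of i] by simp
    qed
  qed
  show ?thesis
  proof (intro exI conjI)
    show "lic ?SV ?SA (\<lambda>k. Inl (xx k)) l" by (rule li)
    show "l \<le> l" by simp
    have e0: "range (\<lambda>k. Inl (xx k)) \<inter> range Inr = {}" by auto
    have ne: "range f \<inter> range Inr \<noteq> {}" using fm[of 0] by (metis IntI rangeI empty_iff)
    have fi: "finite (range f \<inter> range Inr)" using cyc_fin[OF c] by simp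
    have "0 < card (range f \<inter> range Inr)" using ne fi card_gt_0_iff by blast
    thus "card (range (\<lambda>k. Inl (xx k)) \<inter> range Inr) < card (range f \<inter> range Inr)"
      unfolding e0 by simp
  qed
qed

lemma stepAll:
  assumes g: "graph V E" and H: "HYP V E"
    and ind: "indc (star_vertices V E) (star_adj V E) f l"
    and ex: "range f \<inter> range Inr \<noteq> {}"
  shows "\<exists>h l'. lic (star_vertices V E) (star_adj V E) h l' \<and> l' \<le> l \<and>
           card (range h \<inter> range Inr) < card (range f \<inter> range Inr)"
proof (cases "\<forall>k. \<exists>M. f k = Inr M")
  case True thus ?thesis using stepA[OF g H ind] by blast
next
  case False
  have c: "cyc (star_vertices V E) (star_adj V E) f l" using indc_cyc[OF ind] .
  have l1: "1 \<le> l" using cyc_l[OF c] by simp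
  obtain p w where p: "f p = Inl w" using False by (metis sum.exhaust)
  obtain q M where q: "f q = Inr M" using ex by auto
  have "\<exists>i u M. f i = Inl u \<and> f (Suc i) = Inr M"
  proof (rule ccontr)
    assume nn: "\<not> ?thesis"
    have step: "\<exists>u. f (Suc i) = Inl u" if "\<exists>u. f i = Inl u" for i
      using nn that by (metis sum.exhaust)
    have all: "\<exists>u. f (p + n) = Inl u" for n
    proof (induction n)
      case 0 thus ?case using p by simp
    next
      case (Suc n) thus ?case using step[of "p + n"] by simp
    qed
    obtain l0 where l0: "l = Suc l0" using l1 by (cases l) auto
    have e: "p + (q + p * l0) = q + p * l" unfolding l0 by simp
    have "f (p + (q + p * l0)) = f q" unfolding e using cyc_mult[OF c, of q p] .
    thus False using all[of "q + p * l0"] q by auto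
  qed
  then obtain i u M where fi: "f i = Inl u" "f (Suc i) = Inr M" by blast
  define r where "r = i + l - 1"
  define f' where "f' k = f (k + r)" for k
  have ind': "indc (star_vertices V E) (star_adj V E) f' l" unfolding f'_def using indc_rot[OF ind] .
  have e1: "1 + r = i + l" and e2: "2 + r = Suc i + l" using l1 r_def by auto
  have "f' 1 = f (1 + r)" by (simp only: f'_def)
  also have "\<dots> = f (i + l)" by (simp only: e1)
  also have "\<dots> = f i" using cyc_per[OF c] .
  finally have f'1: "f' 1 = Inl u" using fi by simp
  have "f' 2 = f (2 + r)" by (simp only: f'_def)
  also have "\<dots> = f (Suc i + l)" by (simp only: e2)
  also have "\<dots> = f (Suc i)" using cyc_per[OF c] .
  finally have f'2: "f' 2 = Inr M" using fi by simp
  have rg: "range f' = range f" unfolding f'_def using range_rot[OF c] .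
  obtain h l' where hl: "lic (star_vertices V E) (star_adj V E) h l'" "l' \<le> l"
    "range h \<inter> range Inr \<subset> range f' \<inter> range Inr" using stepB[OF g H ind' f'1 f'2] by blast
  have "finite (range f \<inter> range Inr)" using cyc_fin[OF c] by simp
  hence "card (range h \<inter> range Inr) < card (range f \<inter> range Inr)" using hl(3) rg psubset_card_mono by metis
  thus ?thesis using hl by blast
qed

lemma base:
  assumes g: "graph V E"
    and ind: "indc (star_vertices V E) (star_adj V E) f l"
    and no: "range f \<inter> range Inr = {}"
  shows "indc V E (\<lambda>i. projl (f i)) l"
proof -
  let ?g = "\<lambda>i. projl (f i)"
  have fl: "f i = Inl (?g i)" for i
  proof (cases "f i")
    case (Inl a) thus ?thesis by simp
  next
    case (Inr b) thus ?thesis using no by auto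
  qed
  have c: "cyc (star_vertices V E) (star_adj V E) f l" using indc_cyc[OF ind] .
  have "cyc V E ?g l" unfolding cyc_def
  proof (intro conjI allI impI)
    show "3 \<le> l" using cyc_l[OF c] .
  next
    fix i show "?g (i + l) = ?g i" using cyc_per[OF c] by simp
  next
    fix i d :: nat assume "0 < d" "d < l"
    hence "f (i + d) \<noteq> f i" using cyc_dist[OF c] by blast
    thus "?g (i + d) \<noteq> ?g i" using fl by metis
  next
    fix i have "Inl (?g i) \<in> star_vertices V E" using cyc_V[OF c, of i] fl[of i] by metis
    thus "?g i \<in> V" by (simp add: SV_Inl)
  next
    fix i show "E (?g i) (?g (Suc i))" using cyc_E[OF c, of i] fl[of i] fl[of "Suc i"] by (metis star_adj.simps(1))
  qed
  moreover have "?g j = ?g (Suc i) \<or> ?g i = ?g (Suc j)" if "E (?g i) (?g j)" for i j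
  proof -
    have "star_adj V E (f i) (f j)" using that fl[of i] fl[of j] by (metis star_adj.simps(1))
    hence "f j = f (Suc i) \<or> f i = f (Suc j)" using indc_ch[OF ind] by blast
    thus ?thesis by auto
  qed
  ultimately show ?thesis unfolding indc_def using indc_4[OF ind] by blast
qed

lemma lift:
  assumes ind: "indc V E f l"
  shows "indc (star_vertices V E) (star_adj V E) (\<lambda>i. Inl (f i)) l"
proof -
  have c: "cyc V E f l" using indc_cyc[OF ind] .
  have "cyc (star_vertices V E) (star_adj V E) (\<lambda>i. Inl (f i)) l" unfolding cyc_def
  proof (intro conjI allI impI)
    show "3 \<le> l" using cyc_l[OF c] .
  next
    fix i show "Inl (f (i + l)) = Inl (f i)" using cyc_per[OF c] by simp
  next
    fix i d :: nat assume "0 < d" "d < l"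
    thus "Inl (f (i + d)) \<noteq> Inl (f i)" using cyc_dist[OF c] by simp
  next
    fix i show "Inl (f i) \<in> star_vertices V E" using cyc_V[OF c] by (simp add: SV_Inl)
  next
    fix i show "star_adj V E (Inl (f i)) (Inl (f (Suc i)))" using cyc_E[OF c] by simp
  qed
  moreover have "\<And>i j. star_adj V E (Inl (f i)) (Inl (f j)) \<Longrightarrow> Inl (f j) = Inl (f (Suc i)) \<or> Inl (f i) = Inl (f (Suc j))"
    using indc_ch[OF ind] by simp
  ultimately show ?thesis unfolding indc_def using indc_4[OF ind] by blast
qed

lemma main_ind:
  assumes g: "graph V E" and H: "HYP V E"
  shows "indc (star_vertices V E) (star_adj V E) f l \<Longrightarrow> card (range f \<inter> range Inr) = N \<Longrightarrow>
         \<exists>h l'. indc V E h l' \<and> l' \<le> l"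
proof (induction N arbitrary: f l rule: less_induct)
  case (less N)
  show ?case
  proof (cases "range f \<inter> range Inr = {}")
    case True thus ?thesis using base[OF g less.prems(1) True] by blast
  next
    case False
    obtain h l' where hl: "lic (star_vertices V E) (star_adj V E) h l'" "l' \<le> l"
      "card (range h \<inter> range Inr) < card (range f \<inter> range Inr)"
      using stepAll[OF g H less.prems(1) False] by blast
    obtain h' l'' where h': "indc (star_vertices V E) (star_adj V E) h' l''" "l'' \<le> l'" "range h' \<subseteq> range h"
      using L1[OF star_graph[OF g] hl(1)] by blast
    have "finite (range h)" using cyc_fin[OF lic_cyc[OF hl(1)]] .
    moreover have "range h' \<inter> range Inr \<subseteq> range h \<inter> range Inr" using h'(3) by blast
    ultimately have "card (range h' \<inter> range Inr) \<le> card (range h \<inter> range Inr)"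
      by (simp add: card_mono)
    hence "card (range h' \<inter> range Inr) < N" using hl(3) less.prems(2) by simp
    then obtain g' l3 where "indc V E g' l3" "l3 \<le> l''" using less.IH[OF _ h'(1) refl] by blast
    thus ?thesis using h'(2) hl(2) by (meson order.trans)
  qed
qed


lemma mod3: "a < 3 \<Longrightarrow> b < (3::nat) \<Longrightarrow> a \<noteq> b \<Longrightarrow> b = Suc a mod 3 \<or> a = Suc b mod 3"
proof -
  assume a: "a < 3" and b: "b < 3" and ab: "a \<noteq> b"
  have "a = 0 \<or> a = 1 \<or> a = 2" "b = 0 \<or> b = 1 \<or> b = 2" using a b by auto
  thus ?thesis using ab by auto
qed

lemma full_to_indc:
  assumes g: "graph V E" and fc: "full_cycle V E xs"
  shows "indc V E (\<lambda>i. xs ! (i mod length xs)) (length xs)"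
proof -
  let ?n = "length xs"
  define f where "f i = xs ! (i mod ?n)" for i
  have ic: "is_cycle V E xs" using fc unfolding full_cycle_def by blast
  have full: "\<And>\<sigma>. \<sigma> \<in> flag_complex V E \<Longrightarrow> \<sigma> \<subseteq> set xs \<Longrightarrow> \<sigma> \<in> cycle_subcomplex xs"
    using fc unfolding full_cycle_def by blast
  have n3: "3 \<le> ?n" and dxs: "distinct xs" and sV: "set xs \<subseteq> V"
    and cons: "\<And>i. i < ?n \<Longrightarrow> E (xs ! i) (xs ! ((i + 1) mod ?n))"
    using ic unfolding is_cycle_def by blast+
  have n0: "0 < ?n" using n3 by linarith
  have c: "cyc V E f ?n" unfolding cyc_def
  proof (intro conjI allI impI)
    show "3 \<le> ?n" using n3 .
  next
    fix i show "f (i + ?n) = f i" unfolding f_def by simp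
  next
    fix i d :: nat assume "0 < d" "d < ?n"
    hence "(i + d) mod ?n \<noteq> i mod ?n" using mod_neq by blast
    thus "f (i + d) \<noteq> f i" unfolding f_def using dxs n0 by (simp add: nth_eq_iff_index_eq)
  next
    fix i show "f i \<in> V" unfolding f_def using sV n0 by (meson mod_less_divisor nth_mem subsetD)
  next
    fix i
    have "E (xs ! (i mod ?n)) (xs ! ((i mod ?n + 1) mod ?n))" using cons n0 by simp
    moreover have "(i mod ?n + 1) mod ?n = Suc i mod ?n" by (simp add: mod_Suc_eq)
    ultimately show "E (f i) (f (Suc i))" unfolding f_def by simp
  qed
  have sub: "\<exists>p<?n. {xs ! a, xs ! b} = {xs ! p, xs ! ((p + 1) mod ?n)}"
    if ab: "a < ?n" "b < ?n" "E (xs ! a) (xs ! b)" for a b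
  proof -
    let ?s = "{xs ! a, xs ! b}"
    have neq: "xs ! a \<noteq> xs ! b" using ab(3) graph_irr[OF g] by metis
    have "clique V E ?s" unfolding clique_def using ab sV graph_sym[OF g ab(3)] by auto
    hence "?s \<in> flag_complex V E" unfolding flag_complex_def by simp
    moreover have "?s \<subseteq> set xs" using ab by simp
    ultimately have "?s \<in> cycle_subcomplex xs" using full by blast
    then obtain p where p: "p < ?n" "?s = {xs ! p} \<or> ?s = {xs ! p, xs ! ((p + 1) mod ?n)}"
      unfolding cycle_subcomplex_def by blast
    have "?s \<noteq> {xs ! p}" using neq by (metis doubleton_eq_iff insert_absorb2 singleton_insert_inj_eq)
    thus ?thesis using p by blast
  qed
  have n4: "4 \<le> ?n"
  proof (rule ccontr)
    assume "\<not> 4 \<le> ?n" hence n: "?n = 3" using n3 by simp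
    have "clique V E (set xs)" unfolding clique_def
    proof (intro conjI ballI impI)
      show "set xs \<subseteq> V" using sV .
    next
      fix x y assume "x \<in> set xs" "y \<in> set xs" "x \<noteq> y"
      then obtain a b where ab: "a < 3" "b < 3" "x = xs ! a" "y = xs ! b" using n by (metis in_set_conv_nth)
      hence "a \<noteq> b" using \<open>x \<noteq> y\<close> by blast
      hence "b = Suc a mod 3 \<or> a = Suc b mod 3" using mod3 ab by blast
      thus "E x y" using cons[of a] cons[of b] ab n graph_sym[OF g] by auto
    qed
    hence "set xs \<in> flag_complex V E" unfolding flag_complex_def using n by auto
    hence "set xs \<in> cycle_subcomplex xs" using full by blast
    then obtain p where "set xs = {xs ! p} \<or> set xs = {xs ! p, xs ! ((p + 1) mod ?n)}"
      unfolding cycle_subcomplex_def by blast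
    hence "card (set xs) \<le> 2" by (auto simp: card_insert_if)
    moreover have "card (set xs) = 3" using dxs n by (simp add: distinct_card)
    ultimately show False by simp
  qed
  have "indc V E f ?n" unfolding indc_def
  proof (intro conjI allI impI)
    show "cyc V E f ?n" using c .
    show "4 \<le> ?n" using n4 .
    fix i j assume e: "E (f i) (f j)"
    obtain p where p: "p < ?n" "{f i, f j} = {xs ! p, xs ! ((p + 1) mod ?n)}"
      using sub[of "i mod ?n" "j mod ?n"] e n0 unfolding f_def by auto
    have fp: "xs ! p = f p" "xs ! ((p + 1) mod ?n) = f (Suc p)" unfolding f_def using p by simp_all
    have "(f i = f p \<and> f j = f (Suc p)) \<or> (f i = f (Suc p) \<and> f j = f p)"
      using p(2) unfolding fp by (simp add: doubleton_eq_iff)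
    thus "f j = f (Suc i) \<or> f i = f (Suc j)"
    proof
      assume a: "f i = f p \<and> f j = f (Suc p)"
      hence "f (i + 1) = f (p + 1)" using cyc_SH[OF c] by blast
      thus ?thesis using a by simp
    next
      assume a: "f i = f (Suc p) \<and> f j = f p"
      hence "f (j + 1) = f (p + 1)" using cyc_SH[OF c] by metis
      thus ?thesis using a by simp
    qed
  qed
  thus ?thesis unfolding f_def .
qed

lemma indc_to_full:
  assumes g: "graph V E" and ind: "indc V E f l"
  shows "full_cycle V E (map f [0..<l])"
proof -
  let ?xs = "map f [0..<l]"
  have c: "cyc V E f l" using indc_cyc[OF ind] .
  have l3: "3 \<le> l" using cyc_l[OF c] .
  have len: "length ?xs = l" by simp
  have nth: "?xs ! a = f a" if "a < l" for a using that by simp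
  have nthm: "?xs ! (i mod l) = f i" for i using nth[of "i mod l"] l3 cyc_mod[OF c] by simp
  have st: "set ?xs = f ` {0..<l}" by simp
  have ic: "is_cycle V E ?xs" unfolding is_cycle_def
  proof (intro conjI allI impI)
    show "3 \<le> length ?xs" using l3 by simp
    show "distinct ?xs" unfolding distinct_conv_nth using cyc_ne[OF c] by simp
    show "set ?xs \<subseteq> V" using cyc_V[OF c] by auto
    fix i assume "i < length ?xs"
    have "E (f i) (f (Suc i))" using cyc_E[OF c] .
    moreover have "?xs ! ((i + 1) mod length ?xs) = f (Suc i)" using nthm[of "Suc i"] by simp
    ultimately show "E (?xs ! i) (?xs ! ((i + 1) mod length ?xs))" using \<open>i < length ?xs\<close> by simp
  qed
  have "\<sigma> \<in> cycle_subcomplex ?xs" if s: "\<sigma> \<in> flag_complex V E" "\<sigma> \<subseteq> set ?xs" for \<sigma>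
  proof -
    have ne: "\<sigma> \<noteq> {}" and cl: "clique V E \<sigma>" using s(1) unfolding flag_complex_def by auto
    obtain y where y: "y \<in> \<sigma>" using ne by blast
    obtain a where a: "a < l" "y = f a" using y s(2) st by auto
    show ?thesis
    proof (cases "\<sigma> = {y}")
      case True
      hence "\<sigma> = {?xs ! a}" using a nth by simp
      moreover have "a < length ?xs" using a by simp
      ultimately show ?thesis unfolding cycle_subcomplex_def by blast
    next
      case False
      then obtain z where z: "z \<in> \<sigma>" "z \<noteq> y" using y by blast
      obtain b where b: "b < l" "z = f b" using z s(2) st by auto
      have eyz: "E y z" using cl y z unfolding clique_def by (metis)
      have two: "\<sigma> = {y, z}"
      proof
        show "\<sigma> \<subseteq> {y, z}"
        proof
          fix w assume w: "w \<in> \<sigma>"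
          show "w \<in> {y, z}"
          proof (rule ccontr)
            assume "w \<notin> {y, z}"
            hence wyz: "w \<noteq> y" "w \<noteq> z" by auto
            obtain k where k: "w = f k" using w s(2) st by auto
            have "E y w" "E z w" using cl y z w wyz unfolding clique_def by metis+
            thus False using indc_tri3[OF g ind, of a b k] eyz a b k by simp
          qed
        qed
        show "{y, z} \<subseteq> \<sigma>" using y z by blast
      qed
      have "f b = f (Suc a) \<or> f a = f (Suc b)" using indc_ch[OF ind] eyz a b by simp
      thus ?thesis
      proof
        assume "f b = f (Suc a)"
        hence "\<sigma> = {?xs ! a, ?xs ! ((a + 1) mod length ?xs)}" using two a b nth nthm[of "Suc a"] by simp
        moreover have "a < length ?xs" using a by simp
        ultimately show ?thesis unfolding cycle_subcomplex_def by blast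
      next
        assume "f a = f (Suc b)"
        hence "\<sigma> = {?xs ! b, ?xs ! ((b + 1) mod length ?xs)}" using two a b nth nthm[of "Suc b"] by auto
        moreover have "b < length ?xs" using b by simp
        ultimately show ?thesis unfolding cycle_subcomplex_def by blast
      qed
    qed
  qed
  thus ?thesis unfolding full_cycle_def using ic by blast
qed

theorem lemma2p7:
  fixes V :: "'a set" and E :: "'a \<Rightarrow> 'a \<Rightarrow> bool" and k :: enat
  assumes "graph V E"
    and "4 \<le> k"
    and "\<forall>m m'. maximal_clique V E m \<and> maximal_clique V E m' \<and> m \<noteq> m' \<longrightarrow>
           (\<forall>x y. x \<in> m \<inter> m' \<and> y \<in> m \<inter> m' \<longrightarrow> x = y)"
  shows "k_large k (star_vertices V E) (star_adj V E) \<longleftrightarrow> k_large k V E"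
proof -
  have g: "graph V E" using assms(1) .
  have SG: "graph (star_vertices V E) (star_adj V E)" using star_graph[OF g] .
  show ?thesis unfolding k_large_def
  proof
    assume A: "\<not> (\<exists>vs. full_cycle (star_vertices V E) (star_adj V E) vs \<and> enat (length vs) < k)"
    show "\<not> (\<exists>vs. full_cycle V E vs \<and> enat (length vs) < k)"
    proof
      assume "\<exists>vs. full_cycle V E vs \<and> enat (length vs) < k"
      then obtain vs where fc: "full_cycle V E vs" and len: "enat (length vs) < k" by blast
      have "indc V E (\<lambda>i. vs ! (i mod length vs)) (length vs)" using full_to_indc[OF g fc] .
      hence "indc (star_vertices V E) (star_adj V E) (\<lambda>i. Inl (vs ! (i mod length vs))) (length vs)"
        using lift by blast
      hence "full_cycle (star_vertices V E) (star_adj V E) (map (\<lambda>i. Inl (vs ! (i mod length vs))) [0..<length vs])"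
        using indc_to_full[OF SG] by blast
      moreover have "length (map (\<lambda>i. Inl (vs ! (i mod length vs))) [0..<length vs]) = length vs" by simp
      ultimately show False using A len by metis
    qed
  next
    assume B: "\<not> (\<exists>vs. full_cycle V E vs \<and> enat (length vs) < k)"
    show "\<not> (\<exists>vs. full_cycle (star_vertices V E) (star_adj V E) vs \<and> enat (length vs) < k)"
    proof
      assume "\<exists>vs. full_cycle (star_vertices V E) (star_adj V E) vs \<and> enat (length vs) < k"
      then obtain vs where fc: "full_cycle (star_vertices V E) (star_adj V E) vs" and len: "enat (length vs) < k" by blast
      have "indc (star_vertices V E) (star_adj V E) (\<lambda>i. vs ! (i mod length vs)) (length vs)"
        using full_to_indc[OF SG fc] .
      then obtain h l' where h: "indc V E h l'" "l' \<le> length vs"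
        using main_ind[OF g assms(3)] by blast
      have fc': "full_cycle V E (map h [0..<l'])" using indc_to_full[OF g h(1)] .
      have "enat l' \<le> enat (length vs)" using h(2) by simp
      hence "enat l' < k" using len by (rule le_less_trans)
      moreover have "length (map h [0..<l']) = l'" by simp
      ultimately have "enat (length (map h [0..<l'])) < k" by simp
      thus False using B fc' by blast
    qed
  qed
qed

end
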